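(* Let $n\le l$ be positive integers, let $L_l=\{a_1<\dots<a_l\}$ be the linearly ordered semilattice of $l$ elements, and let $t(X)=s(X)$ be an equation over $L_l$ in the variables $X=\{x_1,\dots,x_n\}$ in which every variable occurs. If $\sigma\ne\sigma'$ are two distinct permutations of $\{1,\dots,n\}$, each of the first or second kind with respect to $t(X)=s(X)$, then $Y_\sigma\not\subseteq Y_{\sigma'}$.
   Context: $L_l$ has multiplication $a_ia_j=a_{\min(i,j)}$. A term is a commutative word in $x_1,\dots,x_n$; $\mathrm{Var}(t)$ is the set of variables occurring in $t$. An equation is an ordered pair of terms $t(X)=s(X)$; $P\in L_l^n$ is a solution if $t(P)=s(P)$; $x\le y$ abbreviates $xy=x$. For a system $S$, $V(S)\subseteq L_l^n$ is its set of common solutions. A permutation $\sigma$ of $\{1,\dots,n\}$ is of the first kind if $x_{\sigma(1)}\in\mathrm{Var}(t)\cap\mathrm{Var}(s)$, and of the second kind if $x_{\sigma(1)}\in\mathrm{Var}(s)\setminus\mathrm{Var}(t)$ and $x_{\sigma(2)}\in\mathrm{Var}(t)\setminus\mathrm{Var}(s)$. For $\sigma$ of the first kind, $Y_\sigma=V(\{x_{\sigma(i)}\le x_{\sigma(i+1)}:1\le i\le n-1\})$; for $\sigma$ of the second kind, $Y_\sigma=V(\{x_{\sigma(1)}=x_{\sigma(2)}\}\cup\{x_{\sigma(i)}\le x_{\sigma(i+1)}:2\le i\le n-1\})$. *)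

theory Defs
  imports Main "HOL-Library.Multiset" "HOL-Library.FuncSet" "HOL-Combinatorics.Permutations"
begin

text \<open>The linearly ordered semilattice L_l = {a_1 < ... < a_l} is modelled by the
  indices {1..l}, with a_i identified with i; multiplication a_i a_j = a_(min i j).\<close>

definition Ll :: "nat \<Rightarrow> nat set" where
  "Ll l = {1..l}"

definition Lmult :: "nat \<Rightarrow> nat \<Rightarrow> nat" where
  "Lmult a b = min a b"

definition Lleq :: "nat \<Rightarrow> nat \<Rightarrow> bool" where
  "Lleq a b \<longleftrightarrow> Lmult a b = a"

text \<open>A term is a (nonempty) commutative word in x_1..x_n, i.e. a multiset of variable
  indices; Var(t) is its support.\<close>
definition is_term :: "nat \<Rightarrow> nat multiset \<Rightarrow> bool" where
  "is_term n t \<longleftrightarrow> t \<noteq> {#} \<and> set_mset t \<subseteq> {1..n}"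

definition Var :: "nat multiset \<Rightarrow> nat set" where
  "Var t = set_mset t"

definition Lpow :: "nat \<Rightarrow> nat \<Rightarrow> (nat \<Rightarrow> nat) set" where
  "Lpow l n = {1..n} \<rightarrow>\<^sub>E Ll l"

definition first_kind :: "nat multiset \<Rightarrow> nat multiset \<Rightarrow> (nat \<Rightarrow> nat) \<Rightarrow> bool" where
  "first_kind t s \<sigma> \<longleftrightarrow> \<sigma> 1 \<in> Var t \<inter> Var s"

definition second_kind :: "nat multiset \<Rightarrow> nat multiset \<Rightarrow> (nat \<Rightarrow> nat) \<Rightarrow> bool" where
  "second_kind t s \<sigma> \<longleftrightarrow> \<sigma> 1 \<in> Var s - Var t \<and> \<sigma> 2 \<in> Var t - Var s"

definition Y1 :: "nat \<Rightarrow> nat \<Rightarrow> (nat \<Rightarrow> nat) \<Rightarrow> (nat \<Rightarrow> nat) set" where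
  "Y1 l n \<sigma> = {P \<in> Lpow l n. \<forall>i. 1 \<le> i \<and> i \<le> n - 1 \<longrightarrow> Lleq (P (\<sigma> i)) (P (\<sigma> (i + 1)))}"

definition Y2 :: "nat \<Rightarrow> nat \<Rightarrow> (nat \<Rightarrow> nat) \<Rightarrow> (nat \<Rightarrow> nat) set" where
  "Y2 l n \<sigma> = {P \<in> Lpow l n. P (\<sigma> 1) = P (\<sigma> 2) \<and>
      (\<forall>i. 2 \<le> i \<and> i \<le> n - 1 \<longrightarrow> Lleq (P (\<sigma> i)) (P (\<sigma> (i + 1))))}"

text \<open>Y_sigma with respect to the equation t = s (the two kinds are disjoint).\<close>
definition Ysig :: "nat \<Rightarrow> nat \<Rightarrow> nat multiset \<Rightarrow> nat multiset \<Rightarrow> (nat \<Rightarrow> nat) \<Rightarrow> (nat \<Rightarrow> nat) set" where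
  "Ysig l n t s \<sigma> = (if first_kind t s \<sigma> then Y1 l n \<sigma> else Y2 l n \<sigma>)"

end

theory Submission
  imports Defs
begin

lemma pin: "p permutes S \<Longrightarrow> y \<in> S \<Longrightarrow> p y \<in> S"
  by (simp add: permutes_in_image)

lemma mono_perm_id:
  fixes g :: "nat \<Rightarrow> nat"
  assumes gp: "g permutes {1..n}"
    and inc: "\<And>i. 1 \<le> i \<Longrightarrow> i \<le> n - 1 \<Longrightarrow> g i < g (Suc i)"
  shows "g x = x"
proof (cases "x \<in> {1..n}")
  case False
  then show ?thesis by (rule permutes_not_in[OF gp])
next
  case True
  have rng: "\<And>y. y \<in> {1..n} \<Longrightarrow> g y \<in> {1..n}" by (rule pin[OF gp])
  have A: "\<And>i k. 1 \<le> i \<Longrightarrow> i + k \<le> n \<Longrightarrow> g i + k \<le> g (i + k)"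
  proof -
    fix i k :: nat
    assume "1 \<le> i" "i + k \<le> n"
    then show "g i + k \<le> g (i + k)"
    proof (induction k)
      case 0 then show ?case by simp
    next
      case (Suc k)
      then have "g i + k \<le> g (i + k)" by simp
      moreover have "g (i + k) < g (Suc (i + k))" using Suc.prems by (intro inc) auto
      ultimately show ?case by simp
    qed
  qed
  from True have x1: "1 \<le> x" "x \<le> n" by auto
  have "g 1 + (x - 1) \<le> g (1 + (x - 1))" using A[of 1 "x - 1"] x1 by simp
  moreover have "g 1 \<ge> 1" using rng[of 1] x1 by auto
  ultimately have "g x \<ge> x" using x1 by simp
  moreover have "g x + (n - x) \<le> g (x + (n - x))" using A[of x "n - x"] x1 by simp
  moreover have "g n \<le> n" using rng[of n] x1 by auto
  ultimately show ?thesis using x1 by simp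
qed

lemma perm_eq_from_id:
  assumes "\<sigma> permutes S" "\<sigma>' permutes S" "\<And>x. (inv \<sigma> \<circ> \<sigma>') x = x"
  shows "\<sigma> = \<sigma>'"
proof
  fix x
  have "\<sigma>' x = \<sigma> (inv \<sigma> (\<sigma>' x))" using permutes_inverses(1)[OF assms(1)] by simp
  also have "\<dots> = \<sigma> x" using assms(3)[of x] by simp
  finally show "\<sigma> x = \<sigma>' x" by simp
qed

lemma Lleq_iff: "Lleq a b \<longleftrightarrow> a \<le> b"
  unfolding Lleq_def Lmult_def by auto

theorem lemma3:
  fixes n l :: nat and t s :: "nat multiset" and \<sigma> \<sigma>' :: "nat \<Rightarrow> nat"
  assumes "1 \<le> n" and "n \<le> l"
    and "is_term n t" and "is_term n s"
    and "Var t \<union> Var s = {1..n}"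
    and "\<sigma> permutes {1..n}" and "\<sigma>' permutes {1..n}"
    and "first_kind t s \<sigma> \<or> second_kind t s \<sigma>"
    and "first_kind t s \<sigma>' \<or> second_kind t s \<sigma>'"
    and "\<sigma> \<noteq> \<sigma>'"
  shows "\<not> Ysig l n t s \<sigma> \<subseteq> Ysig l n t s \<sigma>'"
proof -
  note sp = assms(6) and sp' = assms(7)
  define g where "g = inv \<sigma> \<circ> \<sigma>'"
  have gp: "g permutes {1..n}" unfolding g_def
    by (rule permutes_compose[OF sp' permutes_inv[OF sp]])
  have ginj: "\<And>a b. g a = g b \<Longrightarrow> a = b" by (rule injD[OF permutes_inj[OF gp]])
  have grng: "\<And>y. y \<in> {1..n} \<Longrightarrow> g y \<in> {1..n}" by (rule pin[OF gp])
  have invs: "\<And>x. inv \<sigma> (\<sigma> x) = x" by (rule permutes_inverses(2)[OF sp])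
  have sinv: "\<And>x. \<sigma> (inv \<sigma> x) = x" by (rule permutes_inverses(1)[OF sp])
  have irng: "\<And>y. y \<in> {1..n} \<Longrightarrow> inv \<sigma> y \<in> {1..n}"
    by (rule pin[OF permutes_inv[OF sp]])
  have srng: "\<And>y. y \<in> {1..n} \<Longrightarrow> \<sigma> y \<in> {1..n}" by (rule pin[OF sp])
  have srng': "\<And>y. y \<in> {1..n} \<Longrightarrow> \<sigma>' y \<in> {1..n}" by (rule pin[OF sp'])
  have Vt: "Var t \<subseteq> {1..n}" and Vs: "Var s \<subseteq> {1..n}" using assms(5) by auto
  have gid: "\<sigma> = \<sigma>'" if "\<And>i. 1 \<le> i \<Longrightarrow> i \<le> n - 1 \<Longrightarrow> g i < g (Suc i)"
    using perm_eq_from_id[OF sp sp'] mono_perm_id[OF gp that] unfolding g_def by blast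
  have gval: "\<And>x. inv \<sigma> (\<sigma>' x) = g x" unfolding g_def by simp
  show ?thesis
  proof (cases "first_kind t s \<sigma>")
    case True
    define P where "P = restrict (inv \<sigma>) {1..n}"
    have "\<forall>x\<in>{1..n}. inv \<sigma> x \<in> {1..l}"
    proof
      fix x assume "x \<in> {1..n}"
      then have "inv \<sigma> x \<in> {1..n}" by (rule irng)
      then show "inv \<sigma> x \<in> {1..l}" using assms(2) by auto
    qed
    then have PL: "P \<in> Lpow l n" unfolding P_def Lpow_def Ll_def
      by (simp add: restrict_PiE_iff)
    have Ps1: "\<And>i. i \<in> {1..n} \<Longrightarrow> P (\<sigma> i) = i" unfolding P_def using srng invs by simp
    have "P \<in> Y1 l n \<sigma>" unfolding Y1_def using PL
    proof (intro CollectI conjI allI impI)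
      fix i assume i: "1 \<le> i \<and> i \<le> n - 1"
      then have "P (\<sigma> i) = i" "P (\<sigma> (i + 1)) = i + 1" using Ps1[of i] Ps1[of "i+1"] by auto
      then show "Lleq (P (\<sigma> i)) (P (\<sigma> (i + 1)))" by (simp add: Lleq_iff)
    qed
    moreover have "P \<notin> Ysig l n t s \<sigma>'"
    proof
      assume H: "P \<in> Ysig l n t s \<sigma>'"
      show False
      proof (cases "first_kind t s \<sigma>'")
        case True
        then have H1: "P \<in> Y1 l n \<sigma>'" using H unfolding Ysig_def by simp
        have "\<sigma> = \<sigma>'"
        proof (rule gid)
          fix i assume i: "1 \<le> i" "i \<le> n - 1"
          have "Lleq (P (\<sigma>' i)) (P (\<sigma>' (i + 1)))" using H1 i unfolding Y1_def by blast
          moreover have "\<sigma>' i \<in> {1..n}" "\<sigma>' (i+1) \<in> {1..n}" using i srng' by auto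
          ultimately have "g i \<le> g (Suc i)" by (simp add: Lleq_iff P_def gval)
          moreover have "g i \<noteq> g (Suc i)" using ginj n_not_Suc_n by metis
          ultimately show "g i < g (Suc i)" by simp
        qed
        then show False using assms(10) by simp
      next
        case False
        then have sk: "second_kind t s \<sigma>'" using assms(9) by simp
        then have H2: "P \<in> Y2 l n \<sigma>'" using H False unfolding Ysig_def by simp
        have a: "\<sigma>' 1 \<in> {1..n}" "\<sigma>' 2 \<in> {1..n}" "\<sigma>' 1 \<noteq> \<sigma>' 2"
          using sk Vt Vs unfolding second_kind_def by auto
        have "inv \<sigma> (\<sigma>' 1) = inv \<sigma> (\<sigma>' 2)" using H2 a unfolding Y2_def P_def by simp
        then have "\<sigma>' 1 = \<sigma>' 2" using sinv by metis
        then show False using a by simp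
      qed
    qed
    ultimately show ?thesis using True unfolding Ysig_def by auto
  next
    case False
    then have sk: "second_kind t s \<sigma>" using assms(8) by simp
    have s12: "\<sigma> 1 \<in> Var s - Var t" "\<sigma> 2 \<in> Var t - Var s" using sk unfolding second_kind_def by auto
    have s12n: "\<sigma> 1 \<in> {1..n}" "\<sigma> 2 \<in> {1..n}" using s12 Vt Vs by auto
    define P where "P = restrict (\<lambda>x. max 1 (inv \<sigma> x - 1)) {1..n}"
    have "\<forall>x\<in>{1..n}. max 1 (inv \<sigma> x - 1) \<in> {1..l}"
    proof
      fix x assume "x \<in> {1..n}"
      then have "inv \<sigma> x \<in> {1..n}" by (rule irng)
      then show "max 1 (inv \<sigma> x - 1) \<in> {1..l}" using assms(2) by auto
    qed
    then have PL: "P \<in> Lpow l n" unfolding P_def Lpow_def Ll_def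
      by (simp add: restrict_PiE_iff)
    have Ps: "\<And>i. i \<in> {1..n} \<Longrightarrow> P (\<sigma> i) = max 1 (i - 1)" unfolding P_def using srng invs by simp
    have Ps': "\<And>i. i \<in> {1..n} \<Longrightarrow> P (\<sigma>' i) = max 1 (g i - 1)" unfolding P_def using srng' gval by simp
    have one2: "1 \<in> {1..n}" "2 \<in> {1..n}" using s12n permutes_not_in[OF sp, of 2] assms(1) by auto
    have "P \<in> Y2 l n \<sigma>" unfolding Y2_def using PL
    proof (intro CollectI conjI allI impI)
      show "P (\<sigma> 1) = P (\<sigma> 2)" using Ps[OF one2(1)] Ps[OF one2(2)] by simp
    next
      fix i assume i: "2 \<le> i \<and> i \<le> n - 1"
      then have "P (\<sigma> i) = i - 1" "P (\<sigma> (i + 1)) = i" using Ps[of i] Ps[of "i+1"] by auto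
      then show "Lleq (P (\<sigma> i)) (P (\<sigma> (i + 1)))" by (simp add: Lleq_iff)
    qed
    moreover have "P \<notin> Ysig l n t s \<sigma>'"
    proof
      assume H: "P \<in> Ysig l n t s \<sigma>'"
      show False
      proof (cases "first_kind t s \<sigma>'")
        case True
        then have H1: "P \<in> Y1 l n \<sigma>'" using H unfolding Ysig_def by simp
        have ch: "\<And>i. 1 \<le> i \<Longrightarrow> i \<le> n - 1 \<Longrightarrow> P (\<sigma>' i) \<le> P (\<sigma>' (Suc i))"
          using H1 unfolding Y1_def by (auto simp: Lleq_iff)
        have ind: "\<And>k. 1 + k \<le> n \<Longrightarrow> P (\<sigma>' 1) \<le> P (\<sigma>' (1 + k))"
        proof -
          fix k show "1 + k \<le> n \<Longrightarrow> P (\<sigma>' 1) \<le> P (\<sigma>' (1 + k))"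
          proof (induction k)
            case 0 then show ?case by simp
          next
            case (Suc k)
            then have "P (\<sigma>' 1) \<le> P (\<sigma>' (1 + k))" by simp
            moreover have "P (\<sigma>' (1 + k)) \<le> P (\<sigma>' (Suc (1 + k)))" using Suc.prems by (intro ch) auto
            ultimately show ?case by simp
          qed
        qed
        define j where "j = inv \<sigma>' (\<sigma> 1)"
        have jn: "j \<in> {1..n}" unfolding j_def using pin[OF permutes_inv[OF sp']] s12n by simp
        have sj: "\<sigma>' j = \<sigma> 1" unfolding j_def using permutes_inverses(1)[OF sp'] by simp
        have "P (\<sigma>' j) = 1" using sj Ps[of 1] assms(1) by simp
        moreover have "P (\<sigma>' 1) \<le> P (\<sigma>' (1 + (j - 1)))" using ind[of "j - 1"] jn by simp
        ultimately have "P (\<sigma>' 1) \<le> 1" using jn by simp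
        then have "g 1 \<le> 2" using Ps'[of 1] assms(1) by simp
        moreover have "g 1 \<ge> 1" using grng[of 1] assms(1) by simp
        ultimately have "g 1 = 1 \<or> g 1 = 2" by auto
        then have "\<sigma>' 1 = \<sigma> 1 \<or> \<sigma>' 1 = \<sigma> 2" using sinv gval by metis
        then show False using True s12 unfolding first_kind_def by auto
      next
        case False
        then have sk': "second_kind t s \<sigma>'" using assms(9) by simp
        then have H2: "P \<in> Y2 l n \<sigma>'" using H False unfolding Ysig_def by simp
        have a: "\<sigma>' 1 \<in> Var s - Var t" "\<sigma>' 2 \<in> Var t - Var s"
          using sk' unfolding second_kind_def by auto
        have an: "1 \<in> {1..n}" "2 \<in> {1..n}"
        proof -
          show "1 \<in> {1..n}" using assms(1) by simp
          have "\<sigma>' 2 \<in> {1..n}" using a Vt by auto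
          then show "2 \<in> {1..n}" using permutes_not_in[OF sp', of 2] by auto
        qed
        have eq: "max 1 (g 1 - 1) = max 1 (g 2 - 1)" using H2 Ps' an unfolding Y2_def by auto
        have g12: "g 1 \<noteq> g 2" proof assume "g 1 = g 2" then have "(1::nat) = 2" by (rule ginj) then show False by simp qed
        have "g 1 \<ge> 1" "g 2 \<ge> 1" using grng an by auto
        with eq g12 have "g 1 \<le> 2" "g 2 \<le> 2" by linarith+
        moreover have "g 1 \<noteq> 2"
        proof
          assume "g 1 = 2"
          then have "\<sigma>' 1 = \<sigma> 2" using sinv gval by metis
          then show False using a s12 by auto
        qed
        ultimately have g1: "g 1 = 1" and g2: "g 2 = 2" using \<open>g 1 \<ge> 1\<close> \<open>g 2 \<ge> 1\<close> g12 by linarith+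
        have "\<sigma> = \<sigma>'"
        proof (rule gid)
          fix i assume i: "1 \<le> i" "i \<le> n - 1"
          show "g i < g (Suc i)"
          proof (cases "i = 1")
            case True then show ?thesis using g1 g2 by (simp add: numeral_2_eq_2)
          next
            case False
            then have i2: "2 \<le> i" using i by simp
            have "Lleq (P (\<sigma>' i)) (P (\<sigma>' (i + 1)))" using H2 i2 i unfolding Y2_def by blast
            then have le: "max 1 (g i - 1) \<le> max 1 (g (Suc i) - 1)"
              using Ps'[of i] Ps'[of "Suc i"] i by (simp add: Lleq_iff)
            have "g i \<noteq> 1" using g1 ginj False by metis
            moreover have "g i \<ge> 1" using grng i by auto
            moreover have "g (Suc i) \<noteq> 1"
            proof assume "g (Suc i) = 1" then have "g (Suc i) = g 1" using g1 by simp
              then have "Suc i = 1" by (rule ginj) then show False using i2 by simp qed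
            moreover have "g (Suc i) \<noteq> 2"
            proof assume "g (Suc i) = 2" then have "g (Suc i) = g 2" using g2 by simp
              then have "Suc i = 2" by (rule ginj) then show False using i2 by simp qed
            moreover have "g (Suc i) \<ge> 1" using grng i by auto
            moreover have "g i \<noteq> g (Suc i)" using ginj n_not_Suc_n by metis
            ultimately show ?thesis using le by linarith
          qed
        qed
        then show False using assms(10) by simp
      qed
    qed
    ultimately show ?thesis using False unfolding Ysig_def by auto
  qed
qed

end
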